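(* Let $t\geq 1$ and let $M$ be a Sidon set in $\mathbb{F}_2^t$ with $|M| > s_{\max}(t-1)$. Then (a) $\{m_1+m_2+m_3+m_4 : m_1,m_2,m_3,m_4\in M\} = \mathbb{F}_2^t$; and (b) $\dim \langle M\rangle = \dim \langle \{m_1+m_2 : m_1,m_2\in M,\ m_1\neq m_2\}\rangle = t$, where $\langle\cdot\rangle$ denotes linear span.
   Context: $\mathbb{F}_2^t$ is the $t$-dimensional vector space over $\mathbb{F}_2$. A subset $M\subseteq \mathbb{F}_2^t$ is Sidon if $m_1+m_2\neq m_3+m_4$ for all pairwise distinct $m_1,m_2,m_3,m_4\in M$. $s_{\max}(t)$ denotes the maximum size of a Sidon set in $\mathbb{F}_2^t$ (with $s_{\max}(0)=1$). In (a) the $m_i$ need not be distinct. *)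

theory Defs
  imports Main HOL.Vector_Spaces "HOL-Library.Z2" "HOL-Library.Function_Algebras"
begin

text \<open>Vectors of F_2^t are modelled as functions nat \<Rightarrow> bit vanishing at all
 coordinates i \<ge> t; addition is pointwise (Function_Algebras).\<close>

definition F2 :: "nat \<Rightarrow> (nat \<Rightarrow> bit) set" where
  "F2 t = {v. \<forall>i\<ge>t. v i = 0}"

definition f2scale :: "bit \<Rightarrow> (nat \<Rightarrow> bit) \<Rightarrow> (nat \<Rightarrow> bit)" where
  "f2scale c v = (\<lambda>i. c * v i)"

interpretation f2: vector_space f2scale
  by unfold_locales (auto simp: f2scale_def fun_eq_iff algebra_simps)

definition sidon :: "(nat \<Rightarrow> bit) set \<Rightarrow> bool" where
  "sidon M \<longleftrightarrow> (\<forall>m1\<in>M. \<forall>m2\<in>M. \<forall>m3\<in>M. \<forall>m4\<in>M.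
      distinct [m1, m2, m3, m4] \<longrightarrow> m1 + m2 \<noteq> m3 + m4)"

definition s_max :: "nat \<Rightarrow> nat" where
  "s_max t = Max {card M | M. M \<subseteq> F2 t \<and> sidon M}"

end

theory Submission
  imports Defs
begin

lemma bit_add_self[simp]: "(a::bit) + a = 0"
  by (cases a) simp_all

lemma fun_add_self[simp]: "(v::nat \<Rightarrow> bit) + v = 0"
  by (simp add: fun_eq_iff del: add_bit_eq_xor)

lemma F2_add: "a \<in> F2 t \<Longrightarrow> b \<in> F2 t \<Longrightarrow> a + b \<in> F2 t"
  by (simp add: F2_def del: add_bit_eq_xor)

lemma F2_subspace: "f2.subspace (F2 t)"
  by (rule f2.subspaceI) (auto simp: F2_def f2scale_def simp del: add_bit_eq_xor)

lemma F2_finite: "finite (F2 t)"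
proof -
  have "F2 t \<subseteq> (\<lambda>S i. if i \<in> S then 1 else 0) ` Pow {..<t}"
  proof
    fix v assume v: "v \<in> F2 t"
    have "v = (\<lambda>i. if i \<in> {i. v i = 1} then 1 else 0)"
      by (auto simp: fun_eq_iff)
    moreover have "{i. v i = 1} \<in> Pow {..<t}"
      using v by (auto simp: F2_def) (metis not_le zero_neq_one)
    ultimately show "v \<in> (\<lambda>S i. if i \<in> S then 1 else 0) ` Pow {..<t}" by blast
  qed
  then show ?thesis by (rule finite_subset) simp
qed

definition ee :: "nat \<Rightarrow> nat \<Rightarrow> bit" where "ee j = (\<lambda>k. if k = j then 1 else 0)"

lemma ee_basis: "f2.independent (ee ` {..<t}) \<and> f2.span (ee ` {..<t}) = F2 t"
proof (induction t)
  case 0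
  have "F2 0 = {0}" by (auto simp: F2_def fun_eq_iff)
  then show ?case using f2.independent_empty by simp
next
  case (Suc t)
  have sub: "f2.span (ee ` {..<t}) \<subseteq> F2 t"
    using Suc by simp
  have nin: "ee t \<notin> f2.span (ee ` {..<t})"
  proof
    assume "ee t \<in> f2.span (ee ` {..<t})"
    with sub have "ee t \<in> F2 t" by blast
    then show False by (auto simp: F2_def ee_def)
  qed
  have eq: "ee ` {..<Suc t} = insert (ee t) (ee ` {..<t})"
    by (simp add: lessThan_Suc)
  have ind: "f2.independent (ee ` {..<Suc t})"
    unfolding eq using Suc nin by (intro f2.independent_insertI) auto
  have "f2.span (ee ` {..<Suc t}) = F2 (Suc t)"
  proof
    have "ee ` {..<Suc t} \<subseteq> F2 (Suc t)" by (auto simp: F2_def ee_def)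
    then show "f2.span (ee ` {..<Suc t}) \<subseteq> F2 (Suc t)"
      using F2_subspace by (rule f2.span_minimal)
  next
    show "F2 (Suc t) \<subseteq> f2.span (ee ` {..<Suc t})"
    proof
      fix v assume v: "v \<in> F2 (Suc t)"
      define w where "w = v + f2scale (v t) (ee t)"
      have "w \<in> F2 t" using v
        by (auto simp: F2_def w_def f2scale_def ee_def simp del: add_bit_eq_xor)
      then have "w \<in> f2.span (ee ` {..<t})" using Suc by simp
      then have w1: "w \<in> f2.span (ee ` {..<Suc t})"
        by (rule set_mp[OF f2.span_mono, rotated]) auto
      have e1: "f2scale (v t) (ee t) \<in> f2.span (ee ` {..<Suc t})"
        by (intro f2.span_scale f2.span_base) auto
      have "v = w + f2scale (v t) (ee t)"
        by (simp add: w_def add.assoc del: add_bit_eq_xor)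
      then show "v \<in> f2.span (ee ` {..<Suc t})"
        using f2.span_add[OF w1 e1] by simp
    qed
  qed
  with ind show ?case by simp
qed

lemma dim_F2: "f2.dim (F2 t) = t"
proof -
  have "inj_on ee {..<t}" by (auto simp: inj_on_def ee_def fun_eq_iff)
  then have "card (ee ` {..<t}) = t" by (simp add: card_image)
  moreover have "f2.span (ee ` {..<t}) = f2.span (F2 t)"
    using ee_basis[of t] F2_subspace[of t] by (metis f2.span_eq_iff)
  ultimately show ?thesis using f2.dim_eq_card ee_basis by metis
qed


lemma bit_cases_mult: "(c::bit) * a = (if c = 1 then a else 0)"
  by (cases c) simp_all

theorem theorem1p11:
  fixes t :: nat and M :: "(nat \<Rightarrow> bit) set"
  assumes "t \<ge> 1" and "M \<subseteq> F2 t" and "sidon M"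
    and "card M > s_max (t - 1)"
  shows "{m1 + m2 + m3 + m4 | m1 m2 m3 m4. m1 \<in> M \<and> m2 \<in> M \<and> m3 \<in> M \<and> m4 \<in> M} = F2 t \<and>
         f2.dim (f2.span M) = t \<and>
         f2.dim (f2.span {m1 + m2 | m1 m2. m1 \<in> M \<and> m2 \<in> M \<and> m1 \<noteq> m2}) = t"
proof -
  define S4 where "S4 = {m1 + m2 + m3 + m4 | m1 m2 m3 m4. m1 \<in> M \<and> m2 \<in> M \<and> m3 \<in> M \<and> m4 \<in> M}"
  define D where "D = {m1 + m2 | m1 m2. m1 \<in> M \<and> m2 \<in> M \<and> m1 \<noteq> m2}"
  have finM: "finite M" using assms(2) F2_finite finite_subset by blast
  have Mne: "M \<noteq> {}" using assms(4) by auto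
  have S4sub: "S4 \<subseteq> F2 t"
    using assms(2) by (auto simp: S4_def intro!: F2_add)
  have S4eq: "S4 = F2 t"
  proof (rule ccontr)
    assume "S4 \<noteq> F2 t"
    with S4sub obtain x where xF: "x \<in> F2 t" and xS: "x \<notin> S4" by blast
    from Mne obtain m0 where m0: "m0 \<in> M" by blast
    have "0 = m0 + m0 + m0 + m0" by (metis add.assoc fun_add_self add_0_right)
    then have "0 \<in> S4" using m0 unfolding S4_def by blast
    with xS have "x \<noteq> 0" by blast
    then obtain j where xj: "x j = 1" by (auto simp: fun_eq_iff)
    have jt: "j < t" using xF xj by (auto simp: F2_def) (metis not_le zero_neq_one)
    define idx where "idx i = (if i < j then i else Suc i)" for i
    define P where "P v = (\<lambda>i. v (idx i) + v j * x (idx i))" for v :: "nat \<Rightarrow> bit"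
    have P_add: "P (a + b) = P a + P b" for a b
      by (simp add: P_def fun_eq_iff algebra_simps del: add_bit_eq_xor mult_bit_eq_and)
    have P_zero: "v = 0 \<or> v = x" if "P v = 0" for v
    proof -
      have all: "v k = v j * x k" for k
      proof (cases "k = j")
        case True then show ?thesis using xj by simp
      next
        case False
        define i where "i = (if k < j then k else k - 1)"
        have "idx i = k" using False by (auto simp: idx_def i_def)
        moreover have "v (idx i) + v j * x (idx i) = 0"
          using that unfolding P_def by (metis zero_fun_apply)
        ultimately have "v k + v j * x k = 0" by simp
        then show ?thesis by (metis add_left_cancel bit_add_self)
      qed
      define c where "c = v j"
      have veq: "v = (\<lambda>k. c * x k)" unfolding c_def by (rule ext) (rule all)
      show ?thesis
      proof (cases c)
        case zero then show ?thesis using veq by (simp add: fun_eq_iff)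
      next
        case one then show ?thesis using veq by (simp add: fun_eq_iff)
      qed
    qed
    have P_eq: "a = b \<or> a + b = x" if "P a = P b" for a b
    proof -
      have "P (a + b) = 0" using that by (simp add: P_add)
      then have "a + b = 0 \<or> a + b = x" by (rule P_zero)
      moreover have "a + b = 0 \<Longrightarrow> a = b"
        by (metis add_left_cancel fun_add_self)
      ultimately show ?thesis by blast
    qed
    have P_F2: "P v \<in> F2 (t - 1)" if "v \<in> F2 t" for v
      using that xF jt by (auto simp: F2_def P_def idx_def)
    have inj: "inj_on P M"
    proof (rule inj_onI)
      fix a b assume a: "a \<in> M" and b: "b \<in> M" and "P a = P b"
      then have "a = b \<or> a + b = x" using P_eq by blast
      moreover have "a + b \<in> S4"
      proof -
        have "a + b = a + b + a + a" by (metis add.assoc fun_add_self add_0_right)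
        then show ?thesis using a b unfolding S4_def by blast
      qed
      ultimately show "a = b" using xS by blast
    qed
    have sid: "sidon (P ` M)"
      unfolding sidon_def
    proof (intro ballI impI)
      fix p1 p2 p3 p4 assume p: "p1 \<in> P ` M" "p2 \<in> P ` M" "p3 \<in> P ` M" "p4 \<in> P ` M"
        and d: "distinct [p1, p2, p3, p4]"
      from p obtain m1 m2 m3 m4 where m: "m1 \<in> M" "m2 \<in> M" "m3 \<in> M" "m4 \<in> M"
        and pm: "p1 = P m1" "p2 = P m2" "p3 = P m3" "p4 = P m4" by blast
      have dm: "distinct [m1, m2, m3, m4]" using d pm by auto
      show "p1 + p2 \<noteq> p3 + p4"
      proof
        assume "p1 + p2 = p3 + p4"
        then have "P (m1 + m2) = P (m3 + m4)" using pm by (simp add: P_add)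
        then have "m1 + m2 = m3 + m4 \<or> m1 + m2 + (m3 + m4) = x" by (rule P_eq)
        moreover have "m1 + m2 \<noteq> m3 + m4"
          using assms(3)[unfolded sidon_def, rule_format, OF m dm] .
        moreover have "m1 + m2 + (m3 + m4) \<in> S4"
        proof -
          have "m1 + m2 + (m3 + m4) = m1 + m2 + m3 + m4" by (simp only: add.assoc)
          then show ?thesis using m unfolding S4_def by blast
        qed
        ultimately show False using xS by blast
      qed
    qed
    have sub: "P ` M \<subseteq> F2 (t - 1)" using assms(2) P_F2 by blast
    have fin: "finite {card M | M. M \<subseteq> F2 (t - 1) \<and> sidon M}"
    proof -
      have "{card M | M. M \<subseteq> F2 (t - 1) \<and> sidon M} \<subseteq> card ` Pow (F2 (t - 1))" by blast
      then show ?thesis using F2_finite finite_subset by blast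
    qed
    have "card (P ` M) \<le> s_max (t - 1)"
      unfolding s_max_def using sub sid by (intro Max_ge[OF fin]) blast
    moreover have "card (P ` M) = card M" using inj by (rule card_image)
    ultimately show False using assms(4) by simp
  qed
  have spanM: "f2.span M = F2 t"
  proof
    show "f2.span M \<subseteq> F2 t" using assms(2) F2_subspace by (rule f2.span_minimal)
    show "F2 t \<subseteq> f2.span M"
    proof
      fix v assume "v \<in> F2 t"
      then obtain m1 m2 m3 m4 where "m1 \<in> M" "m2 \<in> M" "m3 \<in> M" "m4 \<in> M"
        and v: "v = m1 + m2 + m3 + m4" using S4eq unfolding S4_def by blast
      then show "v \<in> f2.span M"
        by (simp add: f2.span_add f2.span_base)
    qed
  qed
  have spanD: "f2.span D = F2 t"
  proof
    have "D \<subseteq> F2 t" using assms(2) by (auto simp: D_def intro!: F2_add)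
    then show "f2.span D \<subseteq> F2 t" using F2_subspace by (rule f2.span_minimal)
    have pair: "a + b \<in> f2.span D" if "a \<in> M" "b \<in> M" for a b
    proof (cases "a = b")
      case True then show ?thesis by (simp add: f2.span_zero)
    next
      case False then show ?thesis using that by (intro f2.span_base) (auto simp: D_def)
    qed
    show "F2 t \<subseteq> f2.span D"
    proof
      fix v assume "v \<in> F2 t"
      then obtain m1 m2 m3 m4 where m: "m1 \<in> M" "m2 \<in> M" "m3 \<in> M" "m4 \<in> M"
        and v: "v = m1 + m2 + m3 + m4" using S4eq unfolding S4_def by blast
      have "v = (m1 + m2) + (m3 + m4)" using v by (simp add: add.assoc)
      then show "v \<in> f2.span D" using pair m by (simp add: f2.span_add)
    qed
  qed
  show ?thesis using S4eq spanM spanD dim_F2 unfolding S4_def D_def by simp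
qed

end
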